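(* Let $G$ be a $K_3$-free graph and let $P,Q$ be two distinct bicliques of $G$ with $P\cap Q\neq\emptyset$. Then either $P$ and $Q$ are mutually included, or there is a biclique $R$ of $G$ that is mutually included with $P$ and mutually included with $Q$.
   Context: All graphs are finite and simple. A biclique of a graph $G$ is a set $P\subseteq V(G)$ such that the induced subgraph $G[P]$ is a complete bipartite graph with both parts nonempty, and $P$ is inclusion-maximal with this property. Since $G[P]$ is connected, its bipartition into two nonempty independent sets $X,Y$ (every vertex of $X$ adjacent to every vertex of $Y$) is unique; we write $P=XY$ to mean $P=X\cup Y$ with $X,Y$ these two parts, called the sides of $P$. Two bicliques $P,Q$ of $G$ are mutually included if their sides can be named $P=X_PY_P$, $Q=X_QY_Q$ so that $X_Q\subsetneq X_P$ and $Y_P\subsetneq Y_Q$. *)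

theory Defs
  imports Main
begin

definition simple_graph :: "'a set \<Rightarrow> ('a \<Rightarrow> 'a \<Rightarrow> bool) \<Rightarrow> bool" where
  "simple_graph V E \<longleftrightarrow> finite V \<and> (\<forall>x y. E x y \<longrightarrow> x \<in> V \<and> y \<in> V)
     \<and> (\<forall>x y. E x y \<longrightarrow> E y x) \<and> (\<forall>x. \<not> E x x)"

definition triangle_free :: "'a set \<Rightarrow> ('a \<Rightarrow> 'a \<Rightarrow> bool) \<Rightarrow> bool" where
  "triangle_free V E \<longleftrightarrow> \<not> (\<exists>x\<in>V. \<exists>y\<in>V. \<exists>z\<in>V. E x y \<and> E y z \<and> E x z)"

definition biclique_sides :: "'a set \<Rightarrow> ('a \<Rightarrow> 'a \<Rightarrow> bool) \<Rightarrow> 'a set \<Rightarrow> 'a set \<Rightarrow> bool" where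
  "biclique_sides V E X Y \<longleftrightarrow> X \<subseteq> V \<and> Y \<subseteq> V \<and> X \<noteq> {} \<and> Y \<noteq> {} \<and> X \<inter> Y = {}
     \<and> (\<forall>x\<in>X. \<forall>x'\<in>X. \<not> E x x') \<and> (\<forall>y\<in>Y. \<forall>y'\<in>Y. \<not> E y y')
     \<and> (\<forall>x\<in>X. \<forall>y\<in>Y. E x y)"

definition complete_bipartite_set :: "'a set \<Rightarrow> ('a \<Rightarrow> 'a \<Rightarrow> bool) \<Rightarrow> 'a set \<Rightarrow> bool" where
  "complete_bipartite_set V E P \<longleftrightarrow> (\<exists>X Y. P = X \<union> Y \<and> biclique_sides V E X Y)"

definition biclique :: "'a set \<Rightarrow> ('a \<Rightarrow> 'a \<Rightarrow> bool) \<Rightarrow> 'a set \<Rightarrow> bool" where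
  "biclique V E P \<longleftrightarrow> complete_bipartite_set V E P
     \<and> (\<forall>P'. P \<subset> P' \<longrightarrow> \<not> complete_bipartite_set V E P')"

definition mutually_included :: "'a set \<Rightarrow> ('a \<Rightarrow> 'a \<Rightarrow> bool) \<Rightarrow> 'a set \<Rightarrow> 'a set \<Rightarrow> bool" where
  "mutually_included V E P Q \<longleftrightarrow> biclique V E P \<and> biclique V E Q \<and>
     (\<exists>XP YP XQ YQ. P = XP \<union> YP \<and> biclique_sides V E XP YP \<and>
        Q = XQ \<union> YQ \<and> biclique_sides V E XQ YQ \<and> XQ \<subset> XP \<and> YP \<subset> YQ)"

end

theory Submission
  imports Defs
begin

definition nbr :: "'a set \<Rightarrow> ('a \<Rightarrow> 'a \<Rightarrow> bool) \<Rightarrow> 'a set \<Rightarrow> 'a set" where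
  "nbr V E S = {u\<in>V. \<forall>s\<in>S. E u s}"

lemma tri:
  assumes "simple_graph V E" "triangle_free V E" "E a b" "E b c" "E a c"
  shows False
proof -
  have "a \<in> V" "b \<in> V" "c \<in> V" using assms(1,3,4) unfolding simple_graph_def by blast+
  then show False using assms(2,3,4,5) unfolding triangle_free_def by blast
qed

lemma sides_swap:
  assumes "simple_graph V E" "biclique_sides V E X Y"
  shows "biclique_sides V E Y X"
proof -
  have sym: "\<And>a b. E a b \<Longrightarrow> E b a" using assms(1) unfolding simple_graph_def by blast
  show ?thesis using assms(2) sym unfolding biclique_sides_def by (simp add: Int_commute)
qed

lemma nbr_anti: "S \<subseteq> T \<Longrightarrow> nbr V E T \<subseteq> nbr V E S"
  unfolding nbr_def by blast

lemma side_eq: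
  assumes g: "simple_graph V E" and t: "triangle_free V E"
    and b: "biclique V E (X \<union> Y)" and s: "biclique_sides V E X Y"
  shows "X = nbr V E Y"
proof
  show "X \<subseteq> nbr V E Y" using s unfolding biclique_sides_def nbr_def by blast
next
  show "nbr V E Y \<subseteq> X"
  proof
    fix u assume u: "u \<in> nbr V E Y"
    obtain y where y: "y \<in> Y" using s unfolding biclique_sides_def by blast
    have uV: "u \<in> V" and uy: "\<And>y. y \<in> Y \<Longrightarrow> E u y" using u unfolding nbr_def by auto
    have uY: "u \<notin> Y"
    proof
      assume "u \<in> Y"
      then show False using uy[OF y] y s unfolding biclique_sides_def by blast
    qed
    show "u \<in> X"
    proof (rule ccontr)
      assume uX: "u \<notin> X"
      have "biclique_sides V E (insert u X) Y"
        unfolding biclique_sides_def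
      proof (intro conjI)
        show "\<forall>x\<in>insert u X. \<forall>x'\<in>insert u X. \<not> E x x'"
        proof (intro ballI)
          fix a b assume a: "a \<in> insert u X" and bb: "b \<in> insert u X"
          have ind: "\<forall>x\<in>X. \<forall>x'\<in>X. \<not> E x x'" using s unfolding biclique_sides_def by blast
          have ax: "E a y" using a uy[OF y] s y unfolding biclique_sides_def by blast
          have bx: "E b y" using bb uy[OF y] s y unfolding biclique_sides_def by blast
          show "\<not> E a b"
          proof
            assume ab: "E a b"
            have "E y b" using bx g unfolding simple_graph_def by blast
            show False using tri[OF g t ab bx ax] .
          qed
        qed
        show "insert u X \<subseteq> V" using s uV unfolding biclique_sides_def by blast
        show "Y \<subseteq> V" using s unfolding biclique_sides_def by blast
        show "insert u X \<noteq> {}" by blast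
        show "Y \<noteq> {}" using y by blast
        show "insert u X \<inter> Y = {}" using s uY unfolding biclique_sides_def by blast
        show "\<forall>y\<in>Y. \<forall>y'\<in>Y. \<not> E y y'" using s unfolding biclique_sides_def by blast
        show "\<forall>x\<in>insert u X. \<forall>y\<in>Y. E x y" using s uy unfolding biclique_sides_def by blast
      qed
      note bs = this
      have "complete_bipartite_set V E (insert u X \<union> Y)"
        unfolding complete_bipartite_set_def
        apply (rule exI[of _ "insert u X"], rule exI[of _ Y]) using bs by simp
      moreover have "X \<union> Y \<subset> insert u X \<union> Y" using uX uY by blast
      ultimately show False using b unfolding biclique_def by blast
    qed
  qed
qed

lemma side_eq2:
  assumes g: "simple_graph V E" and t: "triangle_free V E"
    and b: "biclique V E (X \<union> Y)" and s: "biclique_sides V E X Y"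
  shows "Y = nbr V E X"
  using side_eq[OF g t _ sides_swap[OF g s]] b by (simp add: Un_commute)

lemma sub_closed:
  assumes g: "simple_graph V E"
    and s': "biclique_sides V E X' Y'" and sx: "X \<subseteq> X'" and sy: "Y \<subseteq> Y'"
    and ne: "X \<noteq> {}" "Y \<noteq> {}"
    and cx: "X = nbr V E Y" and cy: "Y = nbr V E X"
  shows "X' \<union> Y' \<subseteq> X \<union> Y"
proof
  fix u assume u: "u \<in> X' \<union> Y'"
  show "u \<in> X \<union> Y"
  proof (cases "u \<in> X'")
    case True
    then have "u \<in> nbr V E Y" using s' sy unfolding biclique_sides_def nbr_def by blast
    then show ?thesis using cx by blast
  next
    case False
    then have "u \<in> Y'" using u by blast
    moreover have "\<And>a b. E a b \<Longrightarrow> E b a" using g unfolding simple_graph_def by blast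
    ultimately have "u \<in> nbr V E X" using s' sx unfolding biclique_sides_def nbr_def by blast
    then show ?thesis using cy by blast
  qed
qed

lemma closed_biclique:
  assumes g: "simple_graph V E"
    and s: "biclique_sides V E X Y"
    and cx: "X = nbr V E Y" and cy: "Y = nbr V E X"
  shows "biclique V E (X \<union> Y)"
  unfolding biclique_def
proof (intro conjI allI impI notI)
  show "complete_bipartite_set V E (X \<union> Y)" using s unfolding complete_bipartite_set_def by blast
next
  fix P' assume lt: "X \<union> Y \<subset> P'" and c: "complete_bipartite_set V E P'"
  obtain X' Y' where P': "P' = X' \<union> Y'" and s': "biclique_sides V E X' Y'"
    using c unfolding complete_bipartite_set_def by blast
  obtain x0 where x0: "x0 \<in> X" using s unfolding biclique_sides_def by blast
  have ne: "X \<noteq> {}" "Y \<noteq> {}" using s unfolding biclique_sides_def by auto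
  have key: "X \<subseteq> A \<and> Y \<subseteq> B" if sA: "biclique_sides V E A B" and PA: "P' = A \<union> B" and xa: "x0 \<in> A" for A B
  proof -
    have "Y \<subseteq> B"
    proof
      fix y assume y: "y \<in> Y"
      have "E x0 y" using s x0 y unfolding biclique_sides_def by blast
      moreover have "y \<in> A \<union> B" using y lt PA by blast
      ultimately show "y \<in> B" using sA xa unfolding biclique_sides_def by blast
    qed
    moreover have "X \<subseteq> A"
    proof
      fix x assume x: "x \<in> X"
      obtain y where y: "y \<in> Y" using ne by blast
      have "E x y" using s x y unfolding biclique_sides_def by blast
      moreover have "x \<in> A \<union> B" using x lt PA by blast
      moreover have "y \<in> B" using y \<open>Y \<subseteq> B\<close> by blast
      ultimately show "x \<in> A" using sA unfolding biclique_sides_def by blast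
    qed
    ultimately show ?thesis by blast
  qed
  have "x0 \<in> X' \<union> Y'" using x0 lt P' by blast
  then have "P' \<subseteq> X \<union> Y"
  proof
    assume "x0 \<in> X'"
    then have "X \<subseteq> X' \<and> Y \<subseteq> Y'" using key[OF s' P'] by blast
    then show ?thesis using sub_closed[OF g s' _ _ ne cx cy] P' by blast
  next
    assume "x0 \<in> Y'"
    then have "X \<subseteq> Y' \<and> Y \<subseteq> X'" using key[OF sides_swap[OF g s']] P' by blast
    then show ?thesis using sub_closed[OF g sides_swap[OF g s'] _ _ ne cx cy] P' by blast
  qed
  then show False using lt by blast
qed

lemma main:
  assumes g: "simple_graph V E" and t: "triangle_free V E"
    and bP: "biclique V E (XP \<union> YP)" and sP: "biclique_sides V E XP YP"
    and bQ: "biclique V E (XQ \<union> YQ)" and sQ: "biclique_sides V E XQ YQ"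
    and ne: "XP \<union> YP \<noteq> XQ \<union> YQ"
    and v: "v \<in> XP" "v \<in> XQ"
  shows "mutually_included V E (XP \<union> YP) (XQ \<union> YQ) \<or>
         (\<exists>R. biclique V E R \<and> mutually_included V E (XP \<union> YP) R \<and> mutually_included V E (XQ \<union> YQ) R)"
proof -
  have xp: "XP = nbr V E YP" and yp: "YP = nbr V E XP" using side_eq[OF g t bP sP] side_eq2[OF g t bP sP] by auto
  have xq: "XQ = nbr V E YQ" and yq: "YQ = nbr V E XQ" using side_eq[OF g t bQ sQ] side_eq2[OF g t bQ sQ] by auto
  define XR where "XR = XP \<inter> XQ"
  define YR where "YR = nbr V E XR"
  have sym: "\<And>a b. E a b \<Longrightarrow> E b a" using g unfolding simple_graph_def by blast
  have irr: "\<And>a. \<not> E a a" using g unfolding simple_graph_def by blast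
  have YPR: "YP \<subseteq> YR" unfolding YR_def XR_def using sP sym unfolding biclique_sides_def nbr_def by blast
  have YQR: "YQ \<subseteq> YR" unfolding YR_def XR_def using sQ sym unfolding biclique_sides_def nbr_def by blast
  have xr: "XR = nbr V E YR"
  proof
    show "XR \<subseteq> nbr V E YR" unfolding YR_def XR_def nbr_def using sP sym unfolding biclique_sides_def by blast
  next
    have "nbr V E YR \<subseteq> nbr V E YP" by (rule nbr_anti[OF YPR])
    moreover have "nbr V E YR \<subseteq> nbr V E YQ" by (rule nbr_anti[OF YQR])
    ultimately show "nbr V E YR \<subseteq> XR" using xp xq XR_def by blast
  qed
  have sR: "biclique_sides V E XR YR"
    unfolding biclique_sides_def
  proof (intro conjI)
    show "XR \<subseteq> V" using sP XR_def unfolding biclique_sides_def by blast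
    show "YR \<subseteq> V" unfolding YR_def nbr_def by blast
    show "XR \<noteq> {}" using v XR_def by blast
    show "YR \<noteq> {}" using YPR sP unfolding biclique_sides_def by blast
    show "XR \<inter> YR = {}"
    proof (rule ccontr)
      assume "XR \<inter> YR \<noteq> {}"
      then obtain u where u: "u \<in> XR" "u \<in> YR" by blast
      have "E u v" using u v unfolding YR_def XR_def nbr_def using sym by blast
      then show False using u v sP irr unfolding XR_def biclique_sides_def by blast
    qed
    show "\<forall>x\<in>XR. \<forall>x'\<in>XR. \<not> E x x'" using sP XR_def unfolding biclique_sides_def by blast
    show "\<forall>y\<in>YR. \<forall>y'\<in>YR. \<not> E y y'"
    proof (intro ballI notI)
      fix a b assume a: "a \<in> YR" and b: "b \<in> YR" and ab: "E a b"
      have "v \<in> XR" using v XR_def by blast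
      then have "E a v" "E b v" using a b unfolding YR_def nbr_def by auto
      then show False using tri[OF g t ab _ ] sym by blast
    qed
    show "\<forall>x\<in>XR. \<forall>y\<in>YR. E x y" unfolding YR_def nbr_def using sym by blast
  qed
  have bR: "biclique V E (XR \<union> YR)" using closed_biclique[OF g sR xr] YR_def by blast
  show ?thesis
  proof (cases "XR = XP")
    case True
    then have sub: "XP \<subseteq> XQ" using XR_def by blast
    have "XP \<noteq> XQ" using ne xp xq yp yq by metis
    then have s1: "XP \<subset> XQ" using sub by blast
    have "YQ \<subseteq> YP" using nbr_anti[OF sub] yp yq by blast
    moreover have "YQ \<noteq> YP" using \<open>XP \<noteq> XQ\<close> xp xq by metis
    ultimately have s2: "YQ \<subset> YP" by blast
    have "mutually_included V E (XP \<union> YP) (XQ \<union> YQ)"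
      unfolding mutually_included_def
      apply (intro conjI bP bQ)
      apply (rule exI[of _ YP], rule exI[of _ XP], rule exI[of _ YQ], rule exI[of _ XQ])
      using sides_swap[OF g sP] sides_swap[OF g sQ] s1 s2 by blast
    then show ?thesis by blast
  next
    case F1: False
    show ?thesis
    proof (cases "XR = XQ")
      case True
      then have sub: "XQ \<subseteq> XP" using XR_def by blast
      have "XP \<noteq> XQ" using ne xp xq yp yq by metis
      then have s1: "XQ \<subset> XP" using sub by blast
      have "YP \<subseteq> YQ" using nbr_anti[OF sub] yp yq by blast
      moreover have "YQ \<noteq> YP" using \<open>XP \<noteq> XQ\<close> xp xq by metis
      ultimately have s2: "YP \<subset> YQ" by blast
      have "mutually_included V E (XP \<union> YP) (XQ \<union> YQ)"
        unfolding mutually_included_def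
        apply (intro conjI bP bQ)
        apply (rule exI[of _ XP], rule exI[of _ YP], rule exI[of _ XQ], rule exI[of _ YQ])
        using sP sQ s1 s2 by blast
      then show ?thesis by blast
    next
      case F2: False
      have a1: "XR \<subset> XP" "XR \<subset> XQ" using F1 F2 XR_def by auto
      have "YP \<noteq> YR" using F1 xp xr by metis
      then have a2: "YP \<subset> YR" using YPR by blast
      have "YQ \<noteq> YR" using F2 xq xr by metis
      then have a3: "YQ \<subset> YR" using YQR by blast
      have "mutually_included V E (XP \<union> YP) (XR \<union> YR)"
        unfolding mutually_included_def
        apply (intro conjI bP bR)
        apply (rule exI[of _ XP], rule exI[of _ YP], rule exI[of _ XR], rule exI[of _ YR])
        using sP sR a1 a2 by blast
      moreover have "mutually_included V E (XQ \<union> YQ) (XR \<union> YR)"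
        unfolding mutually_included_def
        apply (intro conjI bQ bR)
        apply (rule exI[of _ XQ], rule exI[of _ YQ], rule exI[of _ XR], rule exI[of _ YR])
        using sQ sR a1 a3 by blast
      ultimately show ?thesis using bR by blast
    qed
  qed
qed

theorem corollary1:
  fixes V :: "'a set" and E :: "'a \<Rightarrow> 'a \<Rightarrow> bool" and P Q :: "'a set"
  assumes "simple_graph V E"
    and "triangle_free V E"
    and "biclique V E P" and "biclique V E Q"
    and "P \<noteq> Q"
    and "P \<inter> Q \<noteq> {}"
  shows "mutually_included V E P Q \<or>
         (\<exists>R. biclique V E R \<and> mutually_included V E P R \<and> mutually_included V E Q R)"
proof -
  note g = assms(1) and t = assms(2)
  obtain XP YP where P: "P = XP \<union> YP" and sP: "biclique_sides V E XP YP"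
    using assms(3) unfolding biclique_def complete_bipartite_set_def by blast
  obtain XQ YQ where Q: "Q = XQ \<union> YQ" and sQ: "biclique_sides V E XQ YQ"
    using assms(4) unfolding biclique_def complete_bipartite_set_def by blast
  obtain v where v: "v \<in> P" "v \<in> Q" using assms(6) by blast
  have sP': "biclique_sides V E YP XP" and sQ': "biclique_sides V E YQ XQ"
    using sides_swap[OF g sP] sides_swap[OF g sQ] .
  have bP: "biclique V E (XP \<union> YP)" "biclique V E (YP \<union> XP)" using assms(3) P by (auto simp: Un_commute)
  have bQ: "biclique V E (XQ \<union> YQ)" "biclique V E (YQ \<union> XQ)" using assms(4) Q by (auto simp: Un_commute)
  have neq: "XP \<union> YP \<noteq> XQ \<union> YQ" "YP \<union> XP \<noteq> XQ \<union> YQ" "XP \<union> YP \<noteq> YQ \<union> XQ" "YP \<union> XP \<noteq> YQ \<union> XQ"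
    using assms(5) P Q by (auto simp: Un_commute)
  have PP: "YP \<union> XP = P" and QQ: "YQ \<union> XQ = Q" using P Q by auto
  have "v \<in> XP \<or> v \<in> YP" "v \<in> XQ \<or> v \<in> YQ" using v P Q by auto
  then show ?thesis
  proof (elim disjE)
    assume "v \<in> XP" "v \<in> XQ"
    then show ?thesis using main[OF g t bP(1) sP bQ(1) sQ neq(1)] P Q by blast
  next
    assume "v \<in> XP" "v \<in> YQ"
    then show ?thesis using main[OF g t bP(1) sP bQ(2) sQ' neq(3)] P QQ by blast
  next
    assume "v \<in> YP" "v \<in> XQ"
    then show ?thesis using main[OF g t bP(2) sP' bQ(1) sQ neq(2)] PP Q by blast
  next
    assume "v \<in> YP" "v \<in> YQ"
    then show ?thesis using main[OF g t bP(2) sP' bQ(2) sQ' neq(4)] PP QQ by blast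
  qed
qed

end
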